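(* Let $K\ge 4$ be even and let $\bar t:=K-t$ be even with $2\le \bar t\le K/2$, where $t=KM/N$. Then the D2D coded caching rate $R=N/M-1$ is achievable with some subpacketization $F$ satisfying $F\le F_{\rm JCM}$ and $$\frac{F}{F_{\rm JCM}}\le \min\Big\{\frac{1}{t}\prod_{i=1}^{\bar t/2}(2i-1),\;1\Big\}.$$
   Context: D2D coded caching setting: there are $N\ge 1$ files $W_1,\dots,W_N$ and $K\ge 2$ users, each with a cache of size $M$ files, $0<M\le N$, and $t:=KM/N$ is assumed to be a positive integer. A D2D coded caching scheme with (uncoded placement and) subpacketization $F\in\mathbb{N}_+$ is defined as follows. Fix a packet size $b\ge 1$; each file is a sequence of $F$ packets $W_n=(W_n^{(1)},\dots,W_n^{(F)})$, $W_n^{(j)}\in\{0,1\}^b$. Placement: each user $k\in[K]$ stores the packets $\{W_n^{(j)}:(n,j)\in Z_k\}$ for a fixed index set $Z_k\subseteq[N]\times[F]$ with $|Z_k|\le MF$ (independent of demands and file contents). Delivery: for every demand vector $\mathbf d=(d_1,\dots,d_K)\in[N]^K$, each user $k$ broadcasts to all other users $\ell_k(\mathbf d)\in\mathbb{N}$ blocks in $\{0,1\}^b$, each a deterministic function of the packets stored by user $k$; it is required that for all file contents each user $k$ can recover all $F$ packets of $W_{d_k}$ from its stored packets and the blocks sent by the other users. The rate is $R=\max_{\mathbf d}\frac{1}{F}\sum_{k=1}^K\ell_k(\mathbf d)$ (transmitted bits normalized by the file size $Fb$). The rate $R$ is achievable with subpacketization $F$ if such a scheme with rate $R$ exists for every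 packet size $b\ge 1$. Define $F_{\rm JCM}:=t\binom{K}{t}$. *)

theory Defs
  imports Complex_Main "HOL-Library.FuncSet"
begin

text \<open>Indices: files n \<in> {1..N}, packets j \<in> {1..F}, users k \<in> {1..K}.
  A packet of size b is a bool list of length b.  File contents are a map
  W :: nat \<times> nat \<Rightarrow> bool list, W (n,j) being the j-th packet of file n.\<close>

definition valid_contents :: "nat \<Rightarrow> nat \<Rightarrow> nat \<Rightarrow> (nat \<times> nat \<Rightarrow> bool list) \<Rightarrow> bool" where
  "valid_contents N F b W \<longleftrightarrow> (\<forall>n\<in>{1..N}. \<forall>j\<in>{1..F}. length (W (n, j)) = b)"

definition cache_view :: "(nat \<times> nat) set \<Rightarrow> (nat \<times> nat \<Rightarrow> bool list) \<Rightarrow> (nat \<times> nat \<Rightarrow> bool list)" where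
  "cache_view Zk W = (\<lambda>p. if p \<in> Zk then W p else [])"

definition demands :: "nat \<Rightarrow> nat \<Rightarrow> (nat \<Rightarrow> nat) set" where
  "demands N K = {1..K} \<rightarrow>\<^sub>E {1..N}"

text \<open>Z k : placement index set of user k;
  l d k : number of blocks broadcast by user k under demand d;
  enc d k : encoder of user k, applied to the cache content of user k;
  dec d k : decoder of user k, given its own cache content and the blocks
            sent by the other users (indexed by sender), returning packet j.\<close>
definition D2D_scheme ::
  "nat \<Rightarrow> nat \<Rightarrow> real \<Rightarrow> nat \<Rightarrow> nat \<Rightarrow> (nat \<Rightarrow> (nat \<times> nat) set)
   \<Rightarrow> ((nat \<Rightarrow> nat) \<Rightarrow> nat \<Rightarrow> nat)
   \<Rightarrow> ((nat \<Rightarrow> nat) \<Rightarrow> nat \<Rightarrow> (nat \<times> nat \<Rightarrow> bool list) \<Rightarrow> bool list list)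
   \<Rightarrow> ((nat \<Rightarrow> nat) \<Rightarrow> nat \<Rightarrow> (nat \<times> nat \<Rightarrow> bool list) \<Rightarrow> (nat \<Rightarrow> bool list list) \<Rightarrow> nat \<Rightarrow> bool list)
   \<Rightarrow> bool" where
  "D2D_scheme N K M F b Z l enc dec \<longleftrightarrow>
     (\<forall>k\<in>{1..K}. Z k \<subseteq> {1..N} \<times> {1..F} \<and> real (card (Z k)) \<le> M * real F) \<and>
     (\<forall>d\<in>demands N K. \<forall>k\<in>{1..K}. \<forall>W. valid_contents N F b W \<longrightarrow>
         length (enc d k (cache_view (Z k) W)) = l d k \<and>
         (\<forall>x\<in>set (enc d k (cache_view (Z k) W)). length x = b)) \<and>
     (\<forall>d\<in>demands N K. \<forall>k\<in>{1..K}. \<forall>W. valid_contents N F b W \<longrightarrow>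
         (\<forall>j\<in>{1..F}.
            dec d k (cache_view (Z k) W)
                (\<lambda>k'. if k' \<in> {1..K} \<and> k' \<noteq> k then enc d k' (cache_view (Z k') W) else [])
                j = W (d k, j)))"

definition D2D_rate :: "nat \<Rightarrow> nat \<Rightarrow> nat \<Rightarrow> ((nat \<Rightarrow> nat) \<Rightarrow> nat \<Rightarrow> nat) \<Rightarrow> real" where
  "D2D_rate N K F l = Max ((\<lambda>d. (\<Sum>k\<in>{1..K}. real (l d k)) / real F) ` demands N K)"

definition D2D_achievable :: "nat \<Rightarrow> nat \<Rightarrow> real \<Rightarrow> real \<Rightarrow> nat \<Rightarrow> bool" where
  "D2D_achievable N K M R F \<longleftrightarrow>
     (\<forall>b\<ge>1. \<exists>Z l enc dec. D2D_scheme N K M F b Z l enc dec \<and> D2D_rate N K F l = R)"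

definition F_JCM :: "nat \<Rightarrow> nat \<Rightarrow> nat" where
  "F_JCM K t = t * (K choose t)"

end

theory Submission
  imports Defs
begin

definition bx :: "nat \<Rightarrow> nat set \<Rightarrow> (nat \<Rightarrow> bool list) \<Rightarrow> bool list" where
  "bx b U f = map (\<lambda>i. odd (card {u\<in>U. f u ! i})) [0..<b]"

lemma odd_card_split:
  assumes "finite U" "k \<in> U"
  shows "odd (card {u\<in>U. P u}) = (odd (card {u\<in>U-{k}. P u}) \<noteq> P k)"
proof -
  have "{u\<in>U. P u} = (if P k then insert k {u\<in>U-{k}. P u} else {u\<in>U-{k}. P u})"
    using assms by auto
  then show ?thesis using assms by auto
qed

lemma sum_len_filter:
  assumes "set xs \<subseteq> {\<rho>. g \<rho> \<in> S}" "finite S"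
  shows "(\<Sum>k\<in>S. length (filter (\<lambda>\<rho>. g \<rho> = k) xs)) = length xs"
  using assms
proof (induction xs)
  case Nil then show ?case by simp
next
  case (Cons x xs)
  have "(\<Sum>k\<in>S. length (filter (\<lambda>\<rho>. g \<rho> = k) (x#xs)))
      = (\<Sum>k\<in>S. (if g x = k then 1 else 0) + length (filter (\<lambda>\<rho>. g \<rho> = k) xs))"
    by (intro sum.cong) auto
  also have "\<dots> = 1 + length xs" using Cons by (simp add: sum.distrib)
  finally show ?case by simp
qed

lemma scheme_from_rows:
  fixes N K F :: nat and M R :: real and Aof :: "nat \<Rightarrow> nat set" and RS :: "'r set"
    and sd :: "'r \<Rightarrow> nat" and Rcv :: "'r \<Rightarrow> nat set" and pk :: "'r \<Rightarrow> nat \<Rightarrow> nat"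
  assumes N1: "N \<ge> 1" and F0: "F > 0" and finRS: "finite RS"
    and rows: "\<And>\<rho>. \<rho> \<in> RS \<Longrightarrow> sd \<rho> \<in> {1..K} \<and> sd \<rho> \<notin> Rcv \<rho> \<and> Rcv \<rho> \<subseteq> {1..K}"
    and rowpk: "\<And>\<rho> u. \<rho> \<in> RS \<Longrightarrow> u \<in> Rcv \<rho> \<Longrightarrow> pk \<rho> u \<in> {1..F} \<and> u \<in> Aof (pk \<rho> u)
        \<and> sd \<rho> \<notin> Aof (pk \<rho> u) \<and> (\<forall>v\<in>Rcv \<rho>. v \<noteq> u \<longrightarrow> v \<notin> Aof (pk \<rho> u))"
    and cover: "\<And>k j. k \<in> {1..K} \<Longrightarrow> j \<in> {1..F} \<Longrightarrow> k \<in> Aof j \<Longrightarrow> \<exists>\<rho>\<in>RS. k \<in> Rcv \<rho> \<and> pk \<rho> k = j"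
    and cache: "\<And>k. k \<in> {1..K} \<Longrightarrow> real N * real (card {j\<in>{1..F}. k \<notin> Aof j}) \<le> M * real F"
    and rate: "real (card RS) / real F = R"
  shows "D2D_achievable N K M R F"
  unfolding D2D_achievable_def
proof (intro allI impI)
  fix b :: nat assume "b \<ge> 1"
  obtain xs where xs: "set xs = RS" "distinct xs" using finite_distinct_list[OF finRS] by blast
  define L where "L k = filter (\<lambda>\<rho>. sd \<rho> = k) xs" for k
  define Z where "Z k = {1..N} \<times> {j\<in>{1..F}. k \<notin> Aof j}" for k
  define l where "l (d::nat\<Rightarrow>nat) k = length (L k)" for d k
  define enc where "enc d k V = map (\<lambda>\<rho>. bx b (Rcv \<rho>) (\<lambda>u. V (d u, pk \<rho> u))) (L k)"
    for d :: "nat \<Rightarrow> nat" and k and V :: "nat\<times>nat \<Rightarrow> bool list"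
  define dec where "dec d k V rc j = (if k \<notin> Aof j then V (d k, j) else
       (let \<rho> = (SOME \<rho>. \<rho> \<in> RS \<and> k \<in> Rcv \<rho> \<and> pk \<rho> k = j); s = sd \<rho>;
            i = (SOME i. i < length (L s) \<and> L s ! i = \<rho>)
        in map (\<lambda>i'. (rc s ! i ! i') \<noteq> odd (card {u \<in> Rcv \<rho> - {k}. V (d u, pk \<rho> u) ! i'})) [0..<b]))"
     for d :: "nat \<Rightarrow> nat" and k and V :: "nat\<times>nat \<Rightarrow> bool list" and rc :: "nat \<Rightarrow> bool list list" and j
  have dN: "d u \<in> {1..N}" if "d \<in> demands N K" "u \<in> {1..K}" for d u
    using that by (auto simp: demands_def PiE_def Pi_def)
  have P1: "\<forall>k\<in>{1..K}. Z k \<subseteq> {1..N} \<times> {1..F} \<and> real (card (Z k)) \<le> M * real F"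
  proof
    fix k assume k: "k \<in> {1..K}"
    have "card (Z k) = N * card {j\<in>{1..F}. k \<notin> Aof j}" by (simp add: Z_def card_cartesian_product)
    then show "Z k \<subseteq> {1..N} \<times> {1..F} \<and> real (card (Z k)) \<le> M * real F"
      using cache[OF k] by (auto simp: Z_def)
  qed
  have P2: "\<forall>d\<in>demands N K. \<forall>k\<in>{1..K}. \<forall>W. valid_contents N F b W \<longrightarrow>
         length (enc d k (cache_view (Z k) W)) = l d k \<and>
         (\<forall>x\<in>set (enc d k (cache_view (Z k) W)). length x = b)"
    by (auto simp: enc_def l_def bx_def)
  have P3: "\<forall>d\<in>demands N K. \<forall>k\<in>{1..K}. \<forall>W. valid_contents N F b W \<longrightarrow>
         (\<forall>j\<in>{1..F}.
            dec d k (cache_view (Z k) W)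
                (\<lambda>k'. if k' \<in> {1..K} \<and> k' \<noteq> k then enc d k' (cache_view (Z k') W) else [])
                j = W (d k, j))"
  proof (intro ballI allI impI)
    fix d k W j assume d: "d \<in> demands N K" and k: "k \<in> {1..K}" and W: "valid_contents N F b W"
      and j: "j \<in> {1..F}"
    define rc where "rc = (\<lambda>k'. if k' \<in> {1..K} \<and> k' \<noteq> k then enc d k' (cache_view (Z k') W) else [])"
    have lenW: "length (W (d k, j)) = b" using W dN[OF d k] j by (auto simp: valid_contents_def)
    show "dec d k (cache_view (Z k) W) rc j = W (d k, j)"
    proof (cases "k \<in> Aof j")
      case False
      then show ?thesis using dN[OF d k] j by (simp add: dec_def cache_view_def Z_def)
    next
      case True
      define \<rho> where "\<rho> = (SOME \<rho>. \<rho> \<in> RS \<and> k \<in> Rcv \<rho> \<and> pk \<rho> k = j)"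
      have "\<exists>\<rho>. \<rho> \<in> RS \<and> k \<in> Rcv \<rho> \<and> pk \<rho> k = j" using cover[OF k j True] by blast
      then have r: "\<rho> \<in> RS" "k \<in> Rcv \<rho>" "pk \<rho> k = j" unfolding \<rho>_def by (metis (mono_tags, lifting) someI_ex)+
      define s where "s = sd \<rho>"
      have s: "s \<in> {1..K}" "s \<noteq> k" using rows[OF r(1)] r(2) by (auto simp: s_def)
      have "\<rho> \<in> set (L s)" using r(1) xs by (simp add: L_def s_def)
      then have "\<exists>i. i < length (L s) \<and> L s ! i = \<rho>" by (simp add: in_set_conv_nth)
      define i where "i = (SOME i. i < length (L s) \<and> L s ! i = \<rho>)"
      have i: "i < length (L s)" "L s ! i = \<rho>" unfolding i_def
        by (metis (mono_tags, lifting) \<open>\<exists>i. i < length (L s) \<and> L s ! i = \<rho>\<close> someI_ex)+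
      have finR: "finite (Rcv \<rho>)" using rows[OF r(1)] finite_subset by blast
      have rcs: "rc s ! i = bx b (Rcv \<rho>) (\<lambda>u. cache_view (Z s) W (d u, pk \<rho> u))"
        using s i by (simp add: rc_def enc_def)
      have cvs: "cache_view (Z s) W (d u, pk \<rho> u) = W (d u, pk \<rho> u)" if "u \<in> Rcv \<rho>" for u
      proof -
        have "u \<in> {1..K}" using rows[OF r(1)] that by auto
        then show ?thesis using rowpk[OF r(1) that] dN[OF d] by (auto simp: cache_view_def Z_def s_def)
      qed
      have cvk: "cache_view (Z k) W (d u, pk \<rho> u) = W (d u, pk \<rho> u)" if "u \<in> Rcv \<rho> - {k}" for u
      proof -
        have "u \<in> {1..K}" using rows[OF r(1)] that by auto
        then show ?thesis using rowpk[OF r(1), of u] that r(2) dN[OF d] by (auto simp: cache_view_def Z_def)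
      qed
      have "dec d k (cache_view (Z k) W) rc j =
          map (\<lambda>i'. (rc s ! i ! i') \<noteq> odd (card {u \<in> Rcv \<rho> - {k}. cache_view (Z k) W (d u, pk \<rho> u) ! i'})) [0..<b]"
        using True unfolding dec_def Let_def \<rho>_def[symmetric] s_def[symmetric] i_def[symmetric] by simp
      also have "\<dots> = W (d k, j)"
      proof (rule nth_equalityI)
        show "length (map (\<lambda>i'. (rc s ! i ! i') \<noteq> odd (card {u \<in> Rcv \<rho> - {k}. cache_view (Z k) W (d u, pk \<rho> u) ! i'})) [0..<b]) = length (W (d k, j))"
          using lenW by simp
      next
        fix i' assume "i' < length (map (\<lambda>i'. (rc s ! i ! i') \<noteq> odd (card {u \<in> Rcv \<rho> - {k}. cache_view (Z k) W (d u, pk \<rho> u) ! i'})) [0..<b])"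
        then have i': "i' < b" by simp
        have e1: "rc s ! i ! i' = odd (card {u\<in>Rcv \<rho>. W (d u, pk \<rho> u) ! i'})"
        proof -
          have "{u\<in>Rcv \<rho>. cache_view (Z s) W (d u, pk \<rho> u) ! i'} = {u\<in>Rcv \<rho>. W (d u, pk \<rho> u) ! i'}"
            using cvs by auto
          then show ?thesis using i' by (simp add: rcs bx_def)
        qed
        have e2: "{u \<in> Rcv \<rho> - {k}. cache_view (Z k) W (d u, pk \<rho> u) ! i'} = {u \<in> Rcv \<rho> - {k}. W (d u, pk \<rho> u) ! i'}"
          using cvk by auto
        show "map (\<lambda>i'. (rc s ! i ! i') \<noteq> odd (card {u \<in> Rcv \<rho> - {k}. cache_view (Z k) W (d u, pk \<rho> u) ! i'})) [0..<b] ! i' = W (d k, j) ! i'"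
          using i' e1 e2 odd_card_split[OF finR r(2), of "\<lambda>u. W (d u, pk \<rho> u) ! i'"] r(3) by auto
      qed
      finally show ?thesis .
    qed
  qed
  have sch: "D2D_scheme N K M F b Z l enc dec"
    unfolding D2D_scheme_def using P1 P2 P3 by blast
  have dne: "(\<lambda>k. if k \<in> {1..K} then 1 else undefined) \<in> demands N K"
    using N1 by (auto simp: demands_def PiE_def extensional_def)
  have sumL: "(\<Sum>k\<in>{1..K}. real (l d k)) = real (card RS)" for d
  proof -
    have "(\<Sum>k\<in>{1..K}. l d k) = length xs" unfolding l_def L_def
      by (rule sum_len_filter) (use xs rows in auto)
    then show ?thesis using xs distinct_card by (metis of_nat_sum)
  qed
  have "D2D_rate N K F l = R"
  proof -
    have "(\<lambda>d. (\<Sum>k\<in>{1..K}. real (l d k)) / real F) ` demands N K = {R}"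
      using dne rate sumL by auto
    then show ?thesis by (simp add: D2D_rate_def)
  qed
  then show "\<exists>Z l enc dec. D2D_scheme N K M F b Z l enc dec \<and> D2D_rate N K F l = R"
    using sch by blast
qed

lemma fin_subsets: "finite {A. A \<subseteq> {1..(K::nat)} \<and> P A}"
  by (rule finite_subset[of _ "Pow {1..K}"]) auto

lemma double_count:
  fixes f :: "nat set \<Rightarrow> nat" and K t' :: nat
  assumes "t' \<ge> 1"
  shows "(\<Sum>B\<in>{B. B \<subseteq> {1..K} \<and> card B = t' - 1}. \<Sum>u\<in>{1..K} - B. f (insert u B))
       = t' * (\<Sum>A\<in>{A. A \<subseteq> {1..K} \<and> card A = t'}. f A)"
proof -
  let ?Bs = "{B. B \<subseteq> {1..K} \<and> card B = t' - 1}"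
  let ?As = "{A. A \<subseteq> {1..K} \<and> card A = t'}"
  have fB: "finite ?Bs" and fA: "finite ?As" by (rule fin_subsets)+
  have "(\<Sum>B\<in>?Bs. \<Sum>u\<in>{1..K} - B. f (insert u B)) = (\<Sum>p\<in>Sigma ?Bs (\<lambda>B. {1..K} - B). f (insert (snd p) (fst p)))"
    using fB by (subst sum.Sigma) (auto simp: case_prod_beta)
  also have "\<dots> = (\<Sum>p\<in>Sigma ?As (\<lambda>A. A). f (fst p))"
  proof (rule sum.reindex_bij_witness[where i="\<lambda>p. (fst p - {snd p}, snd p)" and j="\<lambda>p. (insert (snd p) (fst p), snd p)"])
    fix a assume a: "a \<in> Sigma ?Bs (\<lambda>B. {1..K} - B)"
    then show "(fst (insert (snd a) (fst a), snd a) - {snd (insert (snd a) (fst a), snd a)}, snd (insert (snd a) (fst a), snd a)) = a"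
      by (cases a) auto
    from a have fin: "finite (fst a)" by (cases a) (auto intro: finite_subset)
    with a assms show "(insert (snd a) (fst a), snd a) \<in> Sigma ?As (\<lambda>A. A)"
      by (cases a) auto
    show "f (fst (insert (snd a) (fst a), snd a)) = f (insert (snd a) (fst a))" by simp
  next
    fix b assume b: "b \<in> Sigma ?As (\<lambda>A. A)"
    then show "(insert (snd (fst b - {snd b}, snd b)) (fst (fst b - {snd b}, snd b)), snd (fst b - {snd b}, snd b)) = b"
      by (cases b) auto
    from b have fin: "finite (fst b)" by (cases b) (auto intro: finite_subset)
    with b show "(fst b - {snd b}, snd b) \<in> Sigma ?Bs (\<lambda>B. {1..K} - B)"
      by (cases b) auto
  qed
  also have "\<dots> = (\<Sum>A\<in>?As. \<Sum>u\<in>A. f A)"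
    using fA by (subst sum.Sigma) (auto intro: finite_subset simp: case_prod_beta)
  also have "\<dots> = (\<Sum>A\<in>?As. t' * f A)" by (intro sum.cong) auto
  finally show ?thesis by (simp add: sum_distrib_left)
qed

lemma scheme_from_design:
  fixes N K t t' :: nat and M :: real and c X :: "nat set \<Rightarrow> nat"
  defines "As \<equiv> {A. A \<subseteq> {1..K} \<and> card A = t'}" and "Bs \<equiv> {B. B \<subseteq> {1..K} \<and> card B = t' - 1}"
  assumes N1: "N \<ge> 1" and t'1: "t' \<ge> 1" and tK: "t + t' = K" and t1: "t \<ge> 1"
    and Mdef: "real t = real K * M / real N"
    and perB: "\<And>B. B \<in> Bs \<Longrightarrow> (\<Sum>u\<in>{1..K} - B. c (insert u B)) = t * X B \<and> (\<forall>u\<in>{1..K} - B. c (insert u B) \<le> X B)"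
    and reg: "\<And>k. k \<in> {1..K} \<Longrightarrow> K * (\<Sum>A\<in>{A\<in>As. k \<notin> A}. c A) \<le> t * (\<Sum>A\<in>As. c A)"
    and F0: "(\<Sum>A\<in>As. c A) > 0"
  shows "D2D_achievable N K M (real t' / real t) (\<Sum>A\<in>As. c A)"
proof -
  define F where "F = (\<Sum>A\<in>As. c A)"
  have fA: "finite As" and fB: "finite Bs" unfolding As_def Bs_def by (rule fin_subsets)+
  define P where "P = Sigma As (\<lambda>A. {..<c A})"
  have cardP: "card P = F" unfolding P_def F_def using fA by (simp add: card_SigmaI)
  obtain e where e: "bij_betw e {1..F} P"
    using ex_bij_betw_nat_finite_1[of P] cardP unfolding P_def using fA by auto
  define Aof where "Aof j = fst (e j)" for j
  have AofAs: "Aof j \<in> As" if "j \<in> {1..F}" for j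
  proof -
    have "e j \<in> P" using e that bij_betwE by blast
    then show ?thesis unfolding Aof_def P_def by auto
  qed
  have cardQ: "card {j\<in>{1..F}. Q (Aof j)} = (\<Sum>A\<in>{A\<in>As. Q A}. c A)" for Q
  proof -
    have "bij_betw e {j\<in>{1..F}. Q (Aof j)} {p\<in>P. Q (fst p)}"
      by (rule bij_betw_subset[OF e]) (use e in \<open>auto simp: Aof_def bij_betw_def\<close>)
    then have "card {j\<in>{1..F}. Q (Aof j)} = card {p\<in>P. Q (fst p)}" by (rule bij_betw_same_card)
    also have "{p\<in>P. Q (fst p)} = Sigma {A\<in>As. Q A} (\<lambda>A. {..<c A})" unfolding P_def by auto
    also have "card \<dots> = (\<Sum>A\<in>{A\<in>As. Q A}. c A)" using fA by (simp add: card_SigmaI)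
    finally show ?thesis .
  qed
  define Tgt where "Tgt A = {j\<in>{1..F}. Aof j = A}" for A
  have cardT: "card (Tgt A) = c A" if "A \<in> As" for A
  proof -
    have "{A'\<in>As. A' = A} = {A}" using that by auto
    then show ?thesis using cardQ[of "\<lambda>A'. A' = A"] by (simp add: Tgt_def)
  qed
  define x where "x B s = X B - c (insert s B)" for B s
  define Rows where "Rows B u = Sigma ({1..K} - B - {u}) (\<lambda>s. {..<x B s})" for B u
  have cardS: "card ({1..K} - B) = t + 1" if "B \<in> Bs" for B
    using that t'1 tK unfolding Bs_def by (subst card_Diff_subset) (auto intro: finite_subset)
  have sumx: "(\<Sum>s\<in>{1..K} - B. x B s) = X B" if B: "B \<in> Bs" for B
  proof -
    have "(\<Sum>s\<in>{1..K} - B. x B s) + (\<Sum>s\<in>{1..K} - B. c (insert s B)) = (\<Sum>s\<in>{1..K} - B. X B)"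
      unfolding sum.distrib[symmetric] x_def using perB[OF B] by (intro sum.cong) auto
    then show ?thesis using perB[OF B] cardS[OF B] by simp
  qed
  have cardRows: "card (Rows B u) = c (insert u B)" if B: "B \<in> Bs" and u: "u \<in> {1..K} - B" for B u
  proof -
    have "X B = x B u + (\<Sum>s\<in>{1..K} - B - {u}. x B s)"
      using sumx[OF B] u by (simp add: sum.remove)
    moreover have "c (insert u B) \<le> X B" using perB[OF B] u by blast
    ultimately have "(\<Sum>s\<in>{1..K} - B - {u}. x B s) = c (insert u B)" unfolding x_def by linarith
    then show ?thesis unfolding Rows_def by (simp add: card_SigmaI)
  qed
  have insAs: "insert u B \<in> As" if B: "B \<in> Bs" and u: "u \<in> {1..K} - B" for B u
  proof -
    have "finite B" using B unfolding Bs_def by (auto intro: finite_subset)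
    then show ?thesis using B u t'1 unfolding Bs_def As_def by auto
  qed
  define phi where "phi B u = (SOME f. bij_betw f (Rows B u) (Tgt (insert u B)))" for B u
  have phibij: "bij_betw (phi B u) (Rows B u) (Tgt (insert u B))" if B: "B \<in> Bs" and u: "u \<in> {1..K} - B" for B u
  proof -
    have "finite (Rows B u)" unfolding Rows_def by auto
    moreover have "finite (Tgt (insert u B))" unfolding Tgt_def by auto
    ultimately have "\<exists>f. bij_betw f (Rows B u) (Tgt (insert u B))"
      using bij_betw_iff_card cardRows[OF B u] cardT[OF insAs[OF B u]] by metis
    then show ?thesis unfolding phi_def by (rule someI_ex)
  qed
  define RS where "RS = Sigma Bs (\<lambda>B. Sigma ({1..K} - B) (\<lambda>s. {..<x B s}))"
  define sd where "sd = (\<lambda>(B::nat set,s::nat,i::nat). s)"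
  define Rcv where "Rcv = (\<lambda>(B::nat set,s::nat,i::nat). {1..K} - B - {s})"
  define pk where "pk = (\<lambda>(B::nat set,s::nat,i::nat) u. phi B u (s,i))"
  have finRS: "finite RS" unfolding RS_def using fB by auto
  have K0: "K > 0" using tK t1 by simp
  have "D2D_achievable N K M (real t' / real t) F"
  proof (rule scheme_from_rows[where RS=RS and sd=sd and Rcv=Rcv and pk=pk and Aof=Aof])
    show "N \<ge> 1" by fact
    show "F > 0" using F0 F_def by simp
    show "finite RS" by fact
  next
    fix \<rho> assume "\<rho> \<in> RS"
    then show "sd \<rho> \<in> {1..K} \<and> sd \<rho> \<notin> Rcv \<rho> \<and> Rcv \<rho> \<subseteq> {1..K}"
      unfolding RS_def sd_def Rcv_def by auto
  next
    fix \<rho> u assume r: "\<rho> \<in> RS" and u: "u \<in> Rcv \<rho>"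
    obtain B s i where rho: "\<rho> = (B,s,i)" by (cases \<rho>) auto
    have B: "B \<in> Bs" and s: "s \<in> {1..K} - B" and i: "i < x B s" using r rho unfolding RS_def by auto
    have u': "u \<in> {1..K} - B" "u \<noteq> s" using u rho unfolding Rcv_def by auto
    have "(s,i) \<in> Rows B u" unfolding Rows_def using s i u' by auto
    then have "phi B u (s,i) \<in> Tgt (insert u B)" using phibij[OF B u'(1)] bij_betwE by blast
    then show "pk \<rho> u \<in> {1..F} \<and> u \<in> Aof (pk \<rho> u) \<and> sd \<rho> \<notin> Aof (pk \<rho> u)
        \<and> (\<forall>v\<in>Rcv \<rho>. v \<noteq> u \<longrightarrow> v \<notin> Aof (pk \<rho> u))"
      using s u' unfolding pk_def rho sd_def Rcv_def Tgt_def by auto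
  next
    fix k j assume k: "k \<in> {1..K}" and j: "j \<in> {1..F}" and kj: "k \<in> Aof j"
    define B where "B = Aof j - {k}"
    have A: "Aof j \<in> As" using AofAs[OF j] .
    then have B: "B \<in> Bs" unfolding B_def As_def Bs_def using kj by (auto intro: finite_subset)
    have kB: "k \<in> {1..K} - B" using k B_def by auto
    have ins: "insert k B = Aof j" using kj B_def by auto
    have "j \<in> Tgt (insert k B)" unfolding Tgt_def ins using j by auto
    then obtain p where p: "p \<in> Rows B k" "phi B k p = j"
      using phibij[OF B kB] unfolding bij_betw_def by (metis imageE)
    obtain s i where pi: "p = (s,i)" by (cases p) auto
    have "(B,s,i) \<in> RS" using p pi B unfolding Rows_def RS_def by auto
    moreover have "k \<in> Rcv (B,s,i) \<and> pk (B,s,i) k = j" using p pi kB unfolding Rows_def Rcv_def pk_def by auto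
    ultimately show "\<exists>\<rho>\<in>RS. k \<in> Rcv \<rho> \<and> pk \<rho> k = j" by blast
  next
    fix k assume k: "k \<in> {1..K}"
    have cq: "card {j\<in>{1..F}. k \<notin> Aof j} = (\<Sum>A\<in>{A\<in>As. k \<notin> A}. c A)" by (rule cardQ)
    have M: "M = real t * real N / real K" using Mdef N1 K0 by (simp add: field_simps)
    have r: "real K * real (card {j\<in>{1..F}. k \<notin> Aof j}) \<le> real t * real F"
      using reg[OF k] cq F_def by (metis of_nat_le_iff of_nat_mult)
    show "real N * real (card {j\<in>{1..F}. k \<notin> Aof j}) \<le> M * real F"
    proof -
      have "real N * (real K * real (card {j\<in>{1..F}. k \<notin> Aof j})) \<le> real N * (real t * real F)"
        using r by (simp add: mult_left_mono)
      then show ?thesis unfolding M using K0 by (simp add: field_simps)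
    qed
  next
    have "card RS = (\<Sum>B\<in>Bs. \<Sum>s\<in>{1..K} - B. x B s)"
      unfolding RS_def using fB by (simp add: card_SigmaI)
    also have "\<dots> = (\<Sum>B\<in>Bs. X B)" using sumx by simp
    finally have cRS: "card RS = (\<Sum>B\<in>Bs. X B)" .
    have "t * card RS = (\<Sum>B\<in>Bs. t * X B)" unfolding cRS by (simp add: sum_distrib_left)
    also have "\<dots> = (\<Sum>B\<in>Bs. \<Sum>u\<in>{1..K} - B. c (insert u B))" using perB by simp
    also have "\<dots> = t' * F" unfolding Bs_def F_def As_def by (rule double_count[OF t'1])
    finally have "real t * real (card RS) = real t' * real F" by (metis of_nat_mult)
    moreover have "real F > 0" using F0 unfolding F_def[symmetric] by simp
    moreover have "real t > 0" using t1 by simp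
    ultimately show "real (card RS) / real F = real t' / real t"
      by (simp add: divide_simps) (metis mult.commute)
  qed
  then show ?thesis unfolding F_def .
qed

definition partner :: "nat \<Rightarrow> nat" where
  "partner v = (if odd v then v + 1 else v - 1)"

lemma even_ge1: "even (v::nat) \<Longrightarrow> v \<ge> 1 \<Longrightarrow> v \<ge> 2"
  by (cases "v = 1") auto
lemma partner_ge1: "v \<ge> 1 \<Longrightarrow> partner v \<ge> 1"
  using even_ge1[of v] by (auto simp: partner_def)
lemma partner_inv: "v \<ge> 1 \<Longrightarrow> partner (partner v) = v"
  using even_ge1[of v] by (auto simp: partner_def)
lemma partner_neq: "v \<ge> 1 \<Longrightarrow> partner v \<noteq> v"
  by (auto simp: partner_def)
lemma partner_K:
  assumes "v \<in> {1..K}" "even K" shows "partner v \<in> {1..K}"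
proof (cases "odd v")
  case True
  then have "v \<noteq> K" using assms(2) by auto
  then show ?thesis using True assms by (auto simp: partner_def)
next
  case False
  then show ?thesis using assms even_ge1[of v] by (auto simp: partner_def)
qed

definition Dc :: "nat set \<Rightarrow> nat" where
  "Dc A = card {v\<in>A. partner v \<in> A}"

lemma partner_odd: "odd v \<Longrightarrow> partner v = v + 1"
  by (simp add: partner_def)
lemma partner_even: "even v \<Longrightarrow> partner v = v - 1"
  by (simp add: partner_def)
lemma partner_parity: "v \<ge> 1 \<Longrightarrow> odd (partner v) = even v"
  using even_ge1[of v] by (cases "odd v") (auto simp: partner_def)

lemma Dc_even:
  assumes "finite A" "\<forall>v\<in>A. v \<ge> 1"
  shows "even (Dc A)"
proof -
  define E where "E = {v\<in>A. partner v \<in> A}"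
  define Eo where "Eo = {v\<in>E. odd v}"
  define Ee where "Ee = {v\<in>E. even v}"
  have fE: "finite E" using assms unfolding E_def by auto
  have EU: "E = Eo \<union> Ee" unfolding Eo_def Ee_def by blast
  have dj: "Eo \<inter> Ee = {}" unfolding Eo_def Ee_def by blast
  have c: "card E = card Eo + card Ee"
    using fE EU dj by (metis card_Un_disjoint finite_Un)
  have im: "partner ` Eo = Ee"
  proof
    show "partner ` Eo \<subseteq> Ee"
    proof
      fix w assume "w \<in> partner ` Eo"
      then obtain v where v: "v \<in> Eo" "w = partner v" by blast
      have v1: "v \<ge> 1" "v \<in> A" "partner v \<in> A" "odd v" using v assms unfolding Eo_def E_def by auto
      have "partner (partner v) = v" using v1 partner_inv by blast
      moreover have "even (partner v)" using v1 partner_parity[of v] by simp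
      ultimately show "w \<in> Ee" using v1 v unfolding Ee_def E_def by simp
    qed
    show "Ee \<subseteq> partner ` Eo"
    proof
      fix w assume "w \<in> Ee"
      then have w1: "w \<ge> 1" "w \<in> A" "partner w \<in> A" "even w" using assms unfolding Ee_def E_def by auto
      have pp: "partner (partner w) = w" using w1 partner_inv by blast
      moreover have "odd (partner w)" using w1 partner_parity[of w] by simp
      ultimately have "partner w \<in> Eo" using w1 unfolding Eo_def E_def by simp
      then show "w \<in> partner ` Eo" using pp by (metis image_eqI)
    qed
  qed
  have "inj_on partner Eo"
  proof (rule inj_onI)
    fix x y assume "x \<in> Eo" "y \<in> Eo" "partner x = partner y"
    then show "x = y" using assms partner_inv unfolding Eo_def E_def by (metis (no_types, lifting) mem_Collect_eq)
  qed
  then have "card Ee = card Eo" using im by (metis card_image)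
  then show ?thesis unfolding Dc_def E_def[symmetric] using c by simp
qed

lemma Dc_insert:
  assumes u: "u \<notin> A" "u \<ge> 1" and A: "\<forall>v\<in>A. v \<ge> 1" "finite A"
  shows "Dc (insert u A) = (if partner u \<in> A then Dc A + 2 else Dc A)"
proof -
  define E where "E = {v\<in>A. partner v \<in> A}"
  have fE: "finite E" using A unfolding E_def by auto
  have pu: "partner u \<noteq> u" "partner (partner u) = u" using u partner_neq partner_inv by auto
  show ?thesis
  proof (cases "partner u \<in> A")
    case True
    have "{v\<in>insert u A. partner v \<in> insert u A} = insert u (insert (partner u) E)"
    proof (intro equalityI subsetI)
      fix v assume v: "v \<in> {v\<in>insert u A. partner v \<in> insert u A}"
      show "v \<in> insert u (insert (partner u) E)"
      proof (cases "v = u")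
        case False
        then have vA: "v \<in> A" "partner v \<in> insert u A" using v by auto
        show ?thesis
        proof (cases "partner v = u")
          case True
          then have "v = partner u" using vA A partner_inv by metis
          then show ?thesis by simp
        next
          case False
          then show ?thesis using vA unfolding E_def by auto
        qed
      qed simp
    next
      fix v assume "v \<in> insert u (insert (partner u) E)"
      then show "v \<in> {v\<in>insert u A. partner v \<in> insert u A}"
        using True pu unfolding E_def by auto
    qed
    moreover have "u \<notin> insert (partner u) E" using u pu unfolding E_def by auto
    moreover have "partner u \<notin> E" using u pu unfolding E_def by auto
    ultimately show ?thesis using True fE unfolding Dc_def E_def[symmetric] by simp
  next
    case False
    have "{v\<in>insert u A. partner v \<in> insert u A} = E"
    proof (intro equalityI subsetI)
      fix v assume v: "v \<in> {v\<in>insert u A. partner v \<in> insert u A}"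
      have "v \<noteq> u" using v False pu by auto
      then have vA: "v \<in> A" "partner v \<in> insert u A" using v by auto
      have "partner v \<noteq> u"
      proof
        assume "partner v = u"
        then have "partner u = v" using vA A partner_inv by metis
        then show False using False vA by simp
      qed
      then show "v \<in> E" using vA unfolding E_def by auto
    next
      fix v assume "v \<in> E" then show "v \<in> {v\<in>insert u A. partner v \<in> insert u A}"
        unfolding E_def by auto
    qed
    then show ?thesis using False unfolding Dc_def E_def[symmetric] by simp
  qed
qed

lemma count_partner_out:
  assumes B: "B \<subseteq> {1..K}" and K: "even K"
  shows "card {u\<in>{1..K} - B. partner u \<in> B} = card B - Dc B"
proof -
  have fB: "finite B" using B finite_subset by blast
  have B1: "\<forall>v\<in>B. v \<ge> 1" using B by auto
  have eq: "{u\<in>{1..K} - B. partner u \<in> B} = partner ` {v\<in>B. partner v \<notin> B}"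
  proof (intro equalityI subsetI)
    fix u assume u: "u \<in> {u\<in>{1..K} - B. partner u \<in> B}"
    then have "partner (partner u) = u" "u \<ge> 1" using partner_inv by auto
    then have "partner u \<in> {v\<in>B. partner v \<notin> B}" using u by auto
    then show "u \<in> partner ` {v\<in>B. partner v \<notin> B}" using \<open>partner (partner u) = u\<close> by (metis image_eqI)
  next
    fix u assume "u \<in> partner ` {v\<in>B. partner v \<notin> B}"
    then obtain v where v: "v \<in> B" "partner v \<notin> B" "u = partner v" by blast
    have "v \<in> {1..K}" using v B by auto
    then have "u \<in> {1..K}" "partner u = v" using partner_K[OF _ K] partner_inv v by auto
    then show "u \<in> {u\<in>{1..K} - B. partner u \<in> B}" using v by auto
  qed
  have "inj_on partner {v\<in>B. partner v \<notin> B}"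
  proof (rule inj_onI)
    fix x y assume "x \<in> {v\<in>B. partner v \<notin> B}" "y \<in> {v\<in>B. partner v \<notin> B}" "partner x = partner y"
    then show "x = y" using B1 partner_inv by (metis (no_types, lifting) mem_Collect_eq)
  qed
  then have c1: "card {u\<in>{1..K} - B. partner u \<in> B} = card {v\<in>B. partner v \<notin> B}"
    unfolding eq by (rule card_image)
  have "{v\<in>B. partner v \<notin> B} = B - {v\<in>B. partner v \<in> B}" by auto
  then have "card {v\<in>B. partner v \<notin> B} = card B - card {v\<in>B. partner v \<in> B}"
    using fB by (simp add: card_Diff_subset)
  then show ?thesis unfolding Dc_def using c1 by simp
qed

definition sig :: "nat \<Rightarrow> nat \<Rightarrow> nat \<Rightarrow> nat" where
  "sig k k' v = (if v = k then k' else if v = k' then k else if v = partner k then partner k'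
      else if v = partner k' then partner k else v)"

lemma partner_eq_iff: "v \<ge> 1 \<Longrightarrow> w \<ge> 1 \<Longrightarrow> (partner v = w) = (v = partner w)"
  using partner_inv by metis

lemma sig_facts:
  assumes k: "k \<in> {1..K}" and k': "k' \<in> {1..K}" and K: "even K"
  shows "sig k k' (sig k k' v) = v" and "sig k k' k = k'"
    and "v \<in> {1..K} \<Longrightarrow> sig k k' v \<in> {1..K}"
    and "v \<in> {1..K} \<Longrightarrow> sig k k' (partner v) = partner (sig k k' v)"
proof -
  have pk: "partner (partner k) = k" "partner (partner k') = k'" "partner k \<noteq> k" "partner k' \<noteq> k'"
    using k k' partner_inv partner_neq by auto
  have pK: "partner k \<in> {1..K}" "partner k' \<in> {1..K}" using k k' K partner_K by auto
  have s: "sig k k' v = (if v = k then k' else if v = k' then k else if v = partner k then partner k'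
      else if v = partner k' then partner k else v)" for v by (simp add: sig_def)
  consider (c1) "k' = k" | (c2) "k' = partner k" | (c3) "k' \<noteq> k" "k' \<noteq> partner k" by blast
  then have inv_comm: "sig k k' (sig k k' v) = v \<and> (v \<in> {1..K} \<longrightarrow> sig k k' (partner v) = partner (sig k k' v))"
  proof cases
    case c1
    then have "sig k k' w = w" for w using s[of w] by auto
    then show ?thesis by simp
  next
    case c2
    then have pk': "partner k' = k" using pk by simp
    have sw: "sig k k' w = (if w = k then k' else if w = k' then k else w)" for w
      using c2 pk' pk(3) by (auto simp: sig_def)
    have A: "sig k k' (sig k k' v) = v" using sw pk c2 by auto
    have B: "sig k k' (partner v) = partner (sig k k' v)" if v: "v \<in> {1..K}"
    proof -
      have v1: "v \<ge> 1" using v by simp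
      have pv1: "partner v \<ge> 1" using partner_ge1 v1 by blast
      have k1: "k \<ge> 1" "k' \<ge> 1" using k k' by auto
      have e1: "(partner v = k) = (v = k')" using partner_eq_iff[OF v1 k1(1)] c2 by simp
      have e2: "(partner v = k') = (v = k)" using partner_eq_iff[OF v1 k1(2)] pk' by simp
      have kk: "k \<noteq> k'" using c2 pk by auto
      consider "v = k" | "v = k'" | "v \<noteq> k" "v \<noteq> k'" by blast
      then show ?thesis
      proof cases
        case 1 then show ?thesis using sw[of "partner k"] sw[of k] kk pk' c2 by simp
      next
        case 2 then show ?thesis using sw[of "partner k'"] sw[of k'] kk pk' c2 pk by simp
      next
        case 3 then show ?thesis using sw[of "partner v"] sw[of v] e1 e2 by simp
      qed
    qed
    show ?thesis using A B by blast
  next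
    case c3
    have k1: "k \<ge> 1" "k' \<ge> 1" "partner k \<ge> 1" "partner k' \<ge> 1" using k k' pK by auto
    have d: "partner k' \<noteq> k" "partner k' \<noteq> partner k"
      using c3 partner_eq_iff[OF k1(4) k1(1)] partner_eq_iff[OF k1(2) k1(3)] pk by auto
    have A: "sig k k' (sig k k' v) = v" using c3 d pk by (auto simp: sig_def)
    have B: "sig k k' (partner v) = partner (sig k k' v)" if v: "v \<in> {1..K}"
    proof -
      have v1: "v \<ge> 1" using v by simp
      have e1: "(partner v = k) = (v = partner k)" using partner_eq_iff[OF v1 k1(1)] by simp
      have e2: "(partner v = k') = (v = partner k')" using partner_eq_iff[OF v1 k1(2)] by simp
      have e3: "(partner v = partner k) = (v = k)" using partner_eq_iff[OF v1 k1(3)] pk by simp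
      have e4: "(partner v = partner k') = (v = k')" using partner_eq_iff[OF v1 k1(4)] pk by simp
      show ?thesis using e1 e2 e3 e4 c3 d pk by (auto simp: sig_def)
    qed
    show ?thesis using A B by blast
  qed
  show "sig k k' (sig k k' v) = v" using inv_comm by blast
  show "sig k k' k = k'" by (simp add: sig_def)
  show "v \<in> {1..K} \<Longrightarrow> sig k k' v \<in> {1..K}" using k k' pK by (simp add: sig_def)
  show "v \<in> {1..K} \<Longrightarrow> sig k k' (partner v) = partner (sig k k' v)" using inv_comm by blast
qed

definition hh :: "nat \<Rightarrow> nat \<Rightarrow> nat" where
  "hh m j = (\<Prod>i\<in>{1..m}. (if m < i + j then 2*i - 2 else 2*i - 1))"

lemma hh_rec:
  assumes "j < m"
  shows "(2*(m-j) - 1) * hh m (j+1) = (2*(m-j) - 2) * hh m j"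
proof -
  define i0 where "i0 = m - j"
  have i0: "i0 \<in> {1..m}" using assms i0_def by auto
  define R where "R = (\<Prod>i\<in>{1..m}-{i0}. (if m < i + j then 2*i - 2 else 2*i - (1::nat)))"
  have "hh m (j+1) = (if m < i0 + (j+1) then 2*i0 - 2 else 2*i0 - 1) *
      (\<Prod>i\<in>{1..m}-{i0}. (if m < i + (j+1) then 2*i - 2 else 2*i - (1::nat)))"
    unfolding hh_def by (rule prod.remove[OF _ i0]) simp
  also have "(\<Prod>i\<in>{1..m}-{i0}. (if m < i + (j+1) then 2*i - 2 else 2*i - (1::nat))) = R"
    unfolding R_def by (intro prod.cong) (auto simp: i0_def)
  finally have h1: "hh m (j+1) = (2*i0 - 2) * R" using assms i0_def by simp
  have "hh m j = (if m < i0 + j then 2*i0 - 2 else 2*i0 - 1) * R"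
    unfolding hh_def R_def by (rule prod.remove[OF _ i0]) simp
  then have h0: "hh m j = (2*i0 - 1) * R" using assms i0_def by simp
  show ?thesis using h0 h1 unfolding i0_def by simp
qed

lemma hh_mono: "hh m (j+1) \<le> hh m j"
  unfolding hh_def by (intro prod_mono) auto

lemma hh_le0: "hh m j \<le> hh m 0"
  unfolding hh_def by (intro prod_mono) auto

lemma hh0: "hh m 0 = (\<Prod>i\<in>{1..m}. 2*i - 1)"
  unfolding hh_def by (intro prod.cong) auto

lemma hh0_pos: "hh m 0 > 0"
  unfolding hh0 by (intro prod_pos) auto

lemma sum_if_count:
  fixes a b :: nat
  assumes "finite S"
  shows "(\<Sum>u\<in>S. if P u then a else b) = card {u\<in>S. P u} * a + card {u\<in>S. \<not> P u} * b"
proof -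
  have "(\<Sum>u\<in>S. if P u then a else b) = (\<Sum>u\<in>{u\<in>S. P u}. a) + (\<Sum>u\<in>{u\<in>S. \<not> P u}. b)"
    using assms by (simp add: sum.If_cases Int_def Compl_eq)
  then show ?thesis by simp
qed

lemma Dc_le: "finite A \<Longrightarrow> Dc A \<le> card A"
  unfolding Dc_def by (rule card_mono) auto

lemma Dc_sig:
  assumes k: "k \<in> {1..K}" and k': "k' \<in> {1..K}" and K: "even K" and A: "A \<subseteq> {1..K}"
  shows "Dc (sig k k' ` A) = Dc A"
proof -
  let ?s = "sig k k'"
  have inv: "?s (?s v) = v" for v using sig_facts[OF k k' K] by blast
  have inj: "inj ?s" by (metis inv injI)
  have comm: "?s (partner v) = partner (?s v)" if "v \<in> A" for v using sig_facts(4)[OF k k' K] that A by blast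
  have "{w\<in>?s ` A. partner w \<in> ?s ` A} = ?s ` {v\<in>A. partner v \<in> A}"
  proof (intro equalityI subsetI)
    fix w assume "w \<in> {w\<in>?s ` A. partner w \<in> ?s ` A}"
    then obtain v where v: "v \<in> A" "w = ?s v" "partner (?s v) \<in> ?s ` A" by blast
    then have "?s (partner v) \<in> ?s ` A" using comm by simp
    then have "partner v \<in> A" using inj by (simp add: inj_image_mem_iff)
    then show "w \<in> ?s ` {v\<in>A. partner v \<in> A}" using v by blast
  next
    fix w assume "w \<in> ?s ` {v\<in>A. partner v \<in> A}"
    then obtain v where v: "v \<in> A" "partner v \<in> A" "w = ?s v" by blast
    have "partner w = ?s (partner v)" using comm v by simp
    then show "w \<in> {w\<in>?s ` A. partner w \<in> ?s ` A}" using v by auto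
  qed
  then show ?thesis unfolding Dc_def using inj by (simp add: card_image inj_on_subset)
qed

lemma G_sym:
  fixes g :: "nat \<Rightarrow> nat"
  assumes k: "k \<in> {1..K}" and k': "k' \<in> {1..K}" and K: "even K"
  shows "(\<Sum>A\<in>{A\<in>{A. A \<subseteq> {1..K} \<and> card A = t'}. k \<notin> A}. g (Dc A))
       = (\<Sum>A\<in>{A\<in>{A. A \<subseteq> {1..K} \<and> card A = t'}. k' \<notin> A}. g (Dc A))"
proof -
  let ?s = "sig k k'"
  have inv: "?s (?s v) = v" for v using sig_facts[OF k k' K] by blast
  have inj: "inj ?s" by (metis inv injI)
  have sk: "?s k = k'" using sig_facts(2)[OF k k' K] by auto
  have sk': "?s k' = k" using inv[of k] unfolding sk .
  have inK: "?s ` A \<subseteq> {1..K}" if "A \<subseteq> {1..K}" for A using sig_facts(3)[OF k k' K] that by blast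
  have ii: "?s ` ?s ` A = A" for A by (simp add: image_image inv)
  show ?thesis
  proof (rule sum.reindex_bij_witness[where i="\<lambda>A. ?s ` A" and j="\<lambda>A. ?s ` A"])
    fix A assume A: "A \<in> {A\<in>{A. A \<subseteq> {1..K} \<and> card A = t'}. k \<notin> A}"
    show "?s ` ?s ` A = A" by (rule ii)
    have "k' \<notin> ?s ` A" using A inj sk by (metis (no_types, lifting) inj_image_mem_iff mem_Collect_eq)
    then show "?s ` A \<in> {A\<in>{A. A \<subseteq> {1..K} \<and> card A = t'}. k' \<notin> A}"
      using A inK inj by (auto simp: card_image inj_on_subset)
    show "g (Dc (?s ` A)) = g (Dc A)" using Dc_sig[OF k k' K] A by simp
  next
    fix A assume A: "A \<in> {A\<in>{A. A \<subseteq> {1..K} \<and> card A = t'}. k' \<notin> A}"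
    show "?s ` ?s ` A = A" by (rule ii)
    have "k \<notin> ?s ` A" using A inj sk' by (metis (no_types, lifting) inj_image_mem_iff mem_Collect_eq)
    then show "?s ` A \<in> {A\<in>{A. A \<subseteq> {1..K} \<and> card A = t'}. k \<notin> A}"
      using A inK inj by (auto simp: card_image inj_on_subset)
  qed
qed

lemma matching_design:
  fixes N K t m :: nat and M :: real
  assumes N1: "N \<ge> 1" and m1: "m \<ge> 1" and tK: "t + 2*m = K" and tm: "2*m \<le> t" and K: "even K"
    and Mdef: "real t = real K * M / real N"
  shows "D2D_achievable N K M (real (2*m) / real t) (\<Sum>A\<in>{A. A \<subseteq> {1..K} \<and> card A = 2*m}. hh m (Dc A div 2))"
    and "(\<Sum>A\<in>{A. A \<subseteq> {1..K} \<and> card A = 2*m}. hh m (Dc A div 2)) > 0"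
    and "(\<Sum>A\<in>{A. A \<subseteq> {1..K} \<and> card A = 2*m}. hh m (Dc A div 2)) \<le> (K choose (2*m)) * hh m 0"
proof -
  define As where "As = {A. A \<subseteq> {1..K} \<and> card A = 2*m}"
  define c where "c A = hh m (Dc A div 2)" for A
  define F where "F = (\<Sum>A\<in>As. c A)"
  have fA: "finite As" unfolding As_def by (rule fin_subsets)
  have cardAs: "card As = K choose (2*m)" unfolding As_def using n_subsets[of "{1..K}" "2*m"] by simp
  show Fle: "(\<Sum>A\<in>{A. A \<subseteq> {1..K} \<and> card A = 2*m}. hh m (Dc A div 2)) \<le> (K choose (2*m)) * hh m 0"
  proof -
    have "(\<Sum>A\<in>As. c A) \<le> (\<Sum>A\<in>As. hh m 0)" unfolding c_def by (intro sum_mono hh_le0)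
    then show ?thesis using cardAs unfolding As_def c_def by simp
  qed
  define A0 where "A0 = (\<lambda>i. 2*i+1) ` {..<2*m}"
  have A0sub: "A0 \<subseteq> {1..K}" unfolding A0_def using tK tm by auto
  have "inj_on (\<lambda>i::nat. 2*i+1) {..<2*m}" by (auto simp: inj_on_def)
  then have A0card: "card A0 = 2*m" unfolding A0_def by (simp add: card_image)
  have e0: "{v\<in>A0. partner v \<in> A0} = {}" unfolding A0_def by (auto simp: partner_def)
  have "Dc A0 = 0" unfolding Dc_def e0 by (rule card.empty)
  then have cA0: "c A0 = hh m 0" unfolding c_def by simp
  have A0As: "A0 \<in> As" unfolding As_def using A0sub A0card by simp
  have Fpos: "F > 0"
  proof -
    have "c A0 \<le> F" unfolding F_def by (rule member_le_sum[OF A0As]) (auto simp: fA)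
    then show ?thesis using cA0 hh0_pos[of m] by simp
  qed
  then show "(\<Sum>A\<in>{A. A \<subseteq> {1..K} \<and> card A = 2*m}. hh m (Dc A div 2)) > 0"
    unfolding F_def As_def c_def .
  have t1: "t \<ge> 1" using tm m1 by simp
  have perB: "(\<Sum>u\<in>{1..K} - B. c (insert u B)) = t * hh m (Dc B div 2) \<and>
      (\<forall>u\<in>{1..K} - B. c (insert u B) \<le> hh m (Dc B div 2))"
    if B: "B \<in> {B. B \<subseteq> {1..K} \<and> card B = 2*m - 1}" for B
  proof -
    have Bs: "B \<subseteq> {1..K}" and cB: "card B = 2*m - 1" using B by auto
    have fB: "finite B" using Bs finite_subset by blast
    have B1: "\<forall>v\<in>B. v \<ge> 1" using Bs by auto
    define j where "j = Dc B div 2"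
    have ev: "even (Dc B)" using Dc_even[OF fB B1] .
    then have Dj: "Dc B = 2*j" unfolding j_def by simp
    have "Dc B \<le> 2*m - 1" using Dc_le[OF fB] cB by simp
    then have jm: "j < m" using Dj m1 by simp
    define S where "S = {1..K} - B"
    have fS: "finite S" unfolding S_def by simp
    have cS: "card S = t + 1" unfolding S_def using Bs cB tK m1 by (subst card_Diff_subset) (auto intro: finite_subset)
    have cval: "c (insert u B) = (if partner u \<in> B then hh m (j+1) else hh m j)" if u: "u \<in> S" for u
    proof -
      have "u \<notin> B" "u \<ge> 1" using u unfolding S_def by auto
      then have "Dc (insert u B) = (if partner u \<in> B then Dc B + 2 else Dc B)"
        using Dc_insert B1 fB by blast
      then show ?thesis unfolding c_def using Dj by auto
    qed
    define a where "a = card {u\<in>S. partner u \<in> B}"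
    have a: "a = 2*m - 1 - 2*j" unfolding a_def S_def using count_partner_out[OF Bs K] cB Dj by simp
    have S_split: "S = {u\<in>S. partner u \<in> B} \<union> {u\<in>S. partner u \<notin> B}" by auto
    have "card S = a + card {u\<in>S. partner u \<notin> B}" unfolding a_def
      using fS by (subst S_split) (rule card_Un_disjoint, auto)
    then have b: "card {u\<in>S. partner u \<notin> B} = t + 1 - a" using cS by simp
    have sum_eq: "(\<Sum>u\<in>S. c (insert u B)) = a * hh m (j+1) + (t + 1 - a) * hh m j"
    proof -
      have "(\<Sum>u\<in>S. c (insert u B)) = (\<Sum>u\<in>S. if partner u \<in> B then hh m (j+1) else hh m j)"
        using cval by (intro sum.cong) auto
      also have "\<dots> = a * hh m (j+1) + (t + 1 - a) * hh m j"
        using sum_if_count[OF fS] a_def b by simp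
      finally show ?thesis .
    qed
    have rec: "a * hh m (j+1) = (a - 1) * hh m j"
      using hh_rec[OF jm] a by (simp add: right_diff_distrib' algebra_simps)
    have a1: "a \<ge> 1" "a \<le> t + 1" using a jm tm by auto
    have "(a - 1) + (t + 1 - a) = t" using a1 by simp
    then have "a * hh m (j+1) + (t + 1 - a) * hh m j = t * hh m j"
      unfolding rec by (metis add_mult_distrib)
    then have s1: "(\<Sum>u\<in>S. c (insert u B)) = t * hh m (Dc B div 2)" using sum_eq j_def by simp
    have s2: "\<forall>u\<in>S. c (insert u B) \<le> hh m (Dc B div 2)"
      using cval hh_mono[of m j] unfolding j_def by auto
    show ?thesis using s1 s2 unfolding S_def by blast
  qed
  have reg: "K * (\<Sum>A\<in>{A\<in>As. k \<notin> A}. c A) \<le> t * F" if k: "k \<in> {1..K}" for k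
  proof -
    define G where "G k' = (\<Sum>A\<in>{A\<in>As. k' \<notin> A}. c A)" for k'
    have Geq: "G k' = G k" if "k' \<in> {1..K}" for k'
      unfolding G_def As_def c_def using G_sym[OF that k K, of "\<lambda>d. hh m (d div 2)" "2*m"] by simp
    have "(\<Sum>k'\<in>{1..K}. G k') = (\<Sum>k'\<in>{1..K}. G k)" using Geq by simp
    then have e1: "(\<Sum>k'\<in>{1..K}. G k') = K * G k" by simp
    have "(\<Sum>A\<in>As. \<Sum>k'\<in>{k'\<in>{1..K}. k' \<notin> A}. c A) = (\<Sum>k'\<in>{1..K}. \<Sum>A | A \<in> As \<and> k' \<notin> A. c A)"
      using fA by (rule sum.swap_restrict) simp
    then have e2: "(\<Sum>k'\<in>{1..K}. G k') = (\<Sum>A\<in>As. \<Sum>k'\<in>{k'\<in>{1..K}. k' \<notin> A}. c A)"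
      unfolding G_def by simp
    have "card {k'\<in>{1..K}. k' \<notin> A} = t" if "A \<in> As" for A
    proof -
      have "{k'\<in>{1..K}. k' \<notin> A} = {1..K} - A" by auto
      moreover have "card ({1..K} - A) = K - 2*m" using that unfolding As_def
        by (subst card_Diff_subset) (auto intro: finite_subset)
      ultimately show ?thesis using tK by simp
    qed
    then have "(\<Sum>A\<in>As. \<Sum>k'\<in>{k'\<in>{1..K}. k' \<notin> A}. c A) = (\<Sum>A\<in>As. t * c A)" by simp
    then have "K * G k = t * F" using e1 e2 unfolding F_def by (simp add: sum_distrib_left)
    then show ?thesis unfolding G_def by simp
  qed
  have "D2D_achievable N K M (real (2*m) / real t) (\<Sum>A\<in>{A. A \<subseteq> {1..K} \<and> card A = 2*m}. c A)"
  proof (rule scheme_from_design[where X="\<lambda>B. hh m (Dc B div 2)"])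
    show "N \<ge> 1" "2*m \<ge> 1" "t + 2*m = K" "t \<ge> 1" "real t = real K * M / real N" using N1 m1 tK t1 Mdef by auto
    show "\<And>B. B \<in> {B. B \<subseteq> {1..K} \<and> card B = 2 * m - 1} \<Longrightarrow>
         (\<Sum>u\<in>{1..K} - B. c (insert u B)) = t * hh m (Dc B div 2) \<and>
         (\<forall>u\<in>{1..K} - B. c (insert u B) \<le> hh m (Dc B div 2))" by (rule perB)
    show "\<And>k. k \<in> {1..K} \<Longrightarrow> K * (\<Sum>A\<in>{A \<in> {A. A \<subseteq> {1..K} \<and> card A = 2 * m}. k \<notin> A}. c A)
          \<le> t * (\<Sum>A\<in>{A. A \<subseteq> {1..K} \<and> card A = 2 * m}. c A)"
      using reg unfolding F_def As_def by blast
    show "0 < (\<Sum>A\<in>{A. A \<subseteq> {1..K} \<and> card A = 2 * m}. c A)" using Fpos unfolding F_def As_def .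
  qed
  then show "D2D_achievable N K M (real (2*m) / real t) (\<Sum>A\<in>{A. A \<subseteq> {1..K} \<and> card A = 2*m}. hh m (Dc A div 2))"
    unfolding c_def .
qed

lemma jcm_design:
  fixes N K t t' :: nat and M :: real
  assumes N1: "N \<ge> 1" and t'1: "t' \<ge> 1" and tK: "t + t' = K" and t1: "t \<ge> 1"
    and Mdef: "real t = real K * M / real N"
  shows "D2D_achievable N K M (real t' / real t) (t * (K choose t'))"
proof -
  have cardAs: "card {A. A \<subseteq> {1..K} \<and> card A = t'} = K choose t'" using n_subsets[of "{1..K}" t'] by simp
  have Fe: "(\<Sum>A\<in>{A. A \<subseteq> {1..K} \<and> card A = t'}. t) = t * (K choose t')" using cardAs by simp
  have "D2D_achievable N K M (real t' / real t) (\<Sum>A\<in>{A. A \<subseteq> {1..K} \<and> card A = t'}. t)"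
  proof (rule scheme_from_design[where X="\<lambda>B. t + 1"])
    show "N \<ge> 1" "t' \<ge> 1" "t + t' = K" "t \<ge> 1" "real t = real K * M / real N" using assms by auto
  next
    fix B assume B: "B \<in> {B. B \<subseteq> {1..K} \<and> card B = t' - 1}"
    have "card ({1..K} - B) = t + 1" using B t'1 tK by (subst card_Diff_subset) (auto intro: finite_subset)
    then show "(\<Sum>u\<in>{1..K} - B. t) = t * (t + 1) \<and> (\<forall>u\<in>{1..K} - B. t \<le> t + 1)" by simp
  next
    fix k assume k: "k \<in> {1..K}"
    have "{A \<in> {A. A \<subseteq> {1..K} \<and> card A = t'}. k \<notin> A} = {A. A \<subseteq> {1..K} - {k} \<and> card A = t'}" by auto
    then have cc: "card {A \<in> {A. A \<subseteq> {1..K} \<and> card A = t'}. k \<notin> A} = (K - 1) choose t'"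
      using n_subsets[of "{1..K} - {k}" t'] k by simp
    have kb: "K * ((K - 1) choose t') = t * (K choose t')"
    proof -
      have "K - t' = t" using tK by simp
      then show ?thesis using binomial_absorb_comp[of K t'] by simp
    qed
    show "K * (\<Sum>A\<in>{A \<in> {A. A \<subseteq> {1..K} \<and> card A = t'}. k \<notin> A}. t)
        \<le> t * (\<Sum>A\<in>{A. A \<subseteq> {1..K} \<and> card A = t'}. t)"
    proof -
      have "(\<Sum>A\<in>{A \<in> {A. A \<subseteq> {1..K} \<and> card A = t'}. k \<notin> A}. t) = t * ((K - 1) choose t')"
        using cc by simp
      then show ?thesis using Fe kb
        by (metis mult.left_commute order_refl)
    qed
  next
    show "0 < (\<Sum>A\<in>{A. A \<subseteq> {1..K} \<and> card A = t'}. t)" using Fe t1 tK by simp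
  qed
  then show ?thesis unfolding Fe .
qed

theorem theorem1:
  fixes N K t :: nat and M :: real
  assumes "N \<ge> 1" and "K \<ge> 4" and "even K"
    and "0 < M" and "M \<le> real N"
    and "real t = real K * M / real N" and "t > 0"
    and "even (K - t)" and "2 \<le> K - t" and "2 * (K - t) \<le> K"
  shows "\<exists>F::nat. F > 0 \<and> D2D_achievable N K M (real N / M - 1) F \<and>
           F \<le> F_JCM K t \<and>
           real F / real (F_JCM K t)
             \<le> min ((1 / real t) * (\<Prod>i=1..(K - t) div 2. real (2 * i - 1))) 1"
proof -
  note N1 = assms(1) and K = assms(3) and M0 = assms(4) and Mdef = assms(6) and t0 = assms(7)
  define m where "m = (K - t) div 2"
  have tK: "t + 2*m = K" using assms(8,9) unfolding m_def by auto
  have m1: "m \<ge> 1" using assms(9) unfolding m_def by auto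
  have tm: "2*m \<le> t" using assms(10) tK by simp
  define C where "C = K choose t"
  have C2: "K choose (2*m) = C"
  proof -
    have "K - 2*m = t" using tK by simp
    then show ?thesis unfolding C_def using binomial_symmetric[of "2*m" K] tK by simp
  qed
  have Cpos: "C > 0" unfolding C_def using tK by simp
  have FJ: "F_JCM K t = t * C" unfolding F_JCM_def C_def by simp
  have R: "real N / M - 1 = real (2*m) / real t"
  proof -
    have Kpos: "real K > 0" using tK t0 by simp
    have "real t * real N = real K * M" using Mdef N1 by (simp add: field_simps)
    then have "real N / M = real K / real t" using M0 t0 by (simp add: field_simps)
    moreover have "real K = real t + real (2*m)" using tK by simp
    ultimately show ?thesis using t0 by (simp add: field_simps)
  qed
  have P: "(\<Prod>i=1..(K - t) div 2. real (2 * i - 1)) = real (hh m 0)"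
    unfolding m_def[symmetric] hh0 by (simp add: of_nat_prod)
  have tpos: "real t > 0" using t0 by simp
  show ?thesis
  proof (cases "hh m 0 \<le> t")
    case True
    define F where "F = (\<Sum>A\<in>{A. A \<subseteq> {1..K} \<and> card A = 2*m}. hh m (Dc A div 2))"
    have a: "D2D_achievable N K M (real (2*m) / real t) F"
      and b: "F > 0" and c: "F \<le> C * hh m 0"
      using matching_design[OF N1 m1 tK tm K Mdef] unfolding F_def C2 by auto
    have FJle: "F \<le> F_JCM K t" unfolding FJ using c True
      by (metis mult.commute mult_le_mono2 order_trans)
    have r1: "real F / real (F_JCM K t) \<le> 1" using FJle b by simp
    have "real F \<le> real C * real (hh m 0)" using c by (metis of_nat_le_iff of_nat_mult)
    then have "real F / real (F_JCM K t) \<le> real C * real (hh m 0) / (real t * real C)"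
      unfolding FJ of_nat_mult using Cpos tpos by (intro divide_right_mono) (auto simp: mult.commute)
    also have "\<dots> = 1 / real t * real (hh m 0)" using Cpos by simp
    finally have r2: "real F / real (F_JCM K t) \<le> 1 / real t * real (hh m 0)" .
    show ?thesis using a b FJle r1 r2 unfolding R P by (intro exI[of _ F]) auto
  next
    case False
    define F where "F = t * C"
    have a: "D2D_achievable N K M (real (2*m) / real t) F"
      using jcm_design[OF N1 _ tK, of M] m1 t0 Mdef unfolding F_def C2 by auto
    have b: "F > 0" unfolding F_def using Cpos t0 by simp
    have r: "real F / real (F_JCM K t) = 1" unfolding F_def FJ using b F_def by simp
    have "1 \<le> 1 / real t * real (hh m 0)" using False tpos by (simp add: field_simps)
    then show ?thesis using a b r unfolding R P FJ F_def by (intro exI[of _ "t * C"]) auto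
  qed
qed

end
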